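(* Let $X,Y$ be compact metric spaces, $f:X\dashrightarrow Y$ a continuous open-dense defined map, and $U\subset X$ an open dense set such that $f(U)$ is open dense in $Y$ and $f|_U:U\to f(U)$ is a proper covering map of finite degree $\deg(f)$. Then $f^*(SM^+(Y))\subset SM^+(X)$, and for every $\nu\in SM^+(Y)$ we have $f^*(\nu)(\pm1)=\deg(f)\,\nu(\pm1)$; in particular $\|f^*(\nu)\|=\deg(f)\|\nu\|$.
   Context: Strong submeasures: sub-linear bounded maps $C^0(X)\to\mathbb{R}$, with norm $\|\mu\|$ the least $C$ with $|\mu(\varphi)|\le C\|\varphi\|_{L^\infty}$; positive means non-decreasing; $SM^+$ denotes positive strong submeasures. A continuous open-dense defined map $f:X\dashrightarrow Y$ is a continuous map defined on an open dense subset of $X$. For open dense $V\subset Y$ and bounded $g:V\to\mathbb{R}$, $E(g)=g$ on $V$ and $E(g)(y)=\limsup_{z\in V,z\to y}g(z)$ for $y\notin V$. For $\varphi\in C^0(X)$, $(f|_U)_*(\varphi)(y)=\sum_{x\in U,f(x)=y}\varphi(x)$ (continuous on $f(U)$) and $f_*(\varphi):=E((f|_U)_*(\varphi))$, a bounded upper-semicontinuous function on $Y$. For $\nu\in SM^+(Y)$ and $\varphi\in C^0(X)$, $f^*(\nu)(\varphi):=\inf\{\nu(\psi):\psi\in C^0(Y),\ \psi\ge f_*(\varphi)\}$. *)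

theory Defs
  imports "HOL-Analysis.Analysis"
begin

text \<open>The compact metric spaces X, Y are modelled as types of class metric_space whose
  universe is compact.  C^0(X) is the set of functions continuous on UNIV.\<close>

definition sup_norm :: "('a \<Rightarrow> real) \<Rightarrow> real" where
  "sup_norm \<phi> = Sup (range (\<lambda>x. \<bar>\<phi> x\<bar>))"

definition strong_submeasure :: "(('a::topological_space \<Rightarrow> real) \<Rightarrow> real) \<Rightarrow> bool" where
  "strong_submeasure \<mu> \<longleftrightarrow>
     (\<forall>\<phi> \<psi>. continuous_on UNIV \<phi> \<longrightarrow> continuous_on UNIV \<psi> \<longrightarrow> \<mu> (\<lambda>x. \<phi> x + \<psi> x) \<le> \<mu> \<phi> + \<mu> \<psi>) \<and>
     (\<forall>\<phi> (t::real). continuous_on UNIV \<phi> \<longrightarrow> t \<ge> 0 \<longrightarrow> \<mu> (\<lambda>x. t * \<phi> x) = t * \<mu> \<phi>) \<and>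
     (\<exists>C. \<forall>\<phi>. continuous_on UNIV \<phi> \<longrightarrow> \<bar>\<mu> \<phi>\<bar> \<le> C * sup_norm \<phi>)"

definition positive_strong_submeasure :: "(('a::topological_space \<Rightarrow> real) \<Rightarrow> real) \<Rightarrow> bool" where
  "positive_strong_submeasure \<mu> \<longleftrightarrow> strong_submeasure \<mu> \<and>
     (\<forall>\<phi> \<psi>. continuous_on UNIV \<phi> \<longrightarrow> continuous_on UNIV \<psi> \<longrightarrow> (\<forall>x. \<phi> x \<le> \<psi> x) \<longrightarrow> \<mu> \<phi> \<le> \<mu> \<psi>)"

definition sm_norm :: "(('a::topological_space \<Rightarrow> real) \<Rightarrow> real) \<Rightarrow> real" where
  "sm_norm \<mu> = Inf {C. \<forall>\<phi>. continuous_on UNIV \<phi> \<longrightarrow> \<bar>\<mu> \<phi>\<bar> \<le> C * sup_norm \<phi>}"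

definition ext_limsup :: "'b::metric_space set \<Rightarrow> ('b \<Rightarrow> real) \<Rightarrow> 'b \<Rightarrow> real" where
  "ext_limsup V g y = (if y \<in> V then g y
      else real_of_ereal (Limsup (at y within V) (\<lambda>z. ereal (g z))))"

definition push_fwd :: "'a set \<Rightarrow> ('a \<Rightarrow> 'b::metric_space) \<Rightarrow> ('a \<Rightarrow> real) \<Rightarrow> 'b \<Rightarrow> real" where
  "push_fwd U f \<phi> = ext_limsup (f ` U) (\<lambda>y. \<Sum>x\<in>{x\<in>U. f x = y}. \<phi> x)"

definition pull_back :: "'a set \<Rightarrow> ('a \<Rightarrow> 'b::metric_space) \<Rightarrow> (('b \<Rightarrow> real) \<Rightarrow> real)
    \<Rightarrow> ('a \<Rightarrow> real) \<Rightarrow> real" where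
  "pull_back U f \<nu> \<phi> = Inf {\<nu> \<psi> | \<psi>. continuous_on UNIV \<psi> \<and> (\<forall>y. push_fwd U f \<phi> y \<le> \<psi> y)}"

end

theory Submission
  imports Defs
begin


lemma sup_norm_bound:
  fixes \<phi> :: "'c::topological_space \<Rightarrow> real"
  assumes "compact (UNIV::'c set)" "continuous_on UNIV \<phi>"
  shows "\<bar>\<phi> x\<bar> \<le> sup_norm \<phi>"
proof -
  have "compact (range (\<lambda>x. \<bar>\<phi> x\<bar>))"
    using assms by (intro compact_continuous_image continuous_intros) auto
  then have "bdd_above (range (\<lambda>x. \<bar>\<phi> x\<bar>))"
    by (simp add: bounded_imp_bdd_above compact_imp_bounded)
  then show ?thesis unfolding sup_norm_def by (rule cSUP_upper[OF UNIV_I])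
qed

lemma sup_norm_const: "sup_norm (\<lambda>_. c) = \<bar>c\<bar>"
  unfolding sup_norm_def by simp

lemma pssm_const:
  assumes "positive_strong_submeasure \<mu>" "c \<ge> 0"
  shows "\<mu> (\<lambda>_. c * a) = c * \<mu> (\<lambda>_. a)"
proof -
  have "\<forall>\<phi> (t::real). continuous_on UNIV \<phi> \<longrightarrow> t \<ge> 0 \<longrightarrow> \<mu> (\<lambda>x. t * \<phi> x) = t * \<mu> \<phi>"
    using assms(1) unfolding positive_strong_submeasure_def strong_submeasure_def by blast
  from this[rule_format, OF continuous_on_const assms(2)] show ?thesis .
qed

lemma pssm_mono:
  assumes "positive_strong_submeasure \<mu>" "continuous_on UNIV \<phi>" "continuous_on UNIV \<psi>"
     "\<And>x. \<phi> x \<le> \<psi> x"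
  shows "\<mu> \<phi> \<le> \<mu> \<psi>"
  using assms unfolding positive_strong_submeasure_def by blast

lemma pssm_add:
  assumes "positive_strong_submeasure \<mu>" "continuous_on UNIV \<phi>" "continuous_on UNIV \<psi>"
  shows "\<mu> (\<lambda>x. \<phi> x + \<psi> x) \<le> \<mu> \<phi> + \<mu> \<psi>"
  using assms unfolding positive_strong_submeasure_def strong_submeasure_def by blast

lemma pssm_scale:
  assumes "positive_strong_submeasure \<mu>" "continuous_on UNIV \<phi>" "t \<ge> 0"
  shows "\<mu> (\<lambda>x. t * \<phi> x) = t * \<mu> \<phi>"
  using assms unfolding positive_strong_submeasure_def strong_submeasure_def by blast

lemma pssm_norm:
  fixes \<mu> :: "('c::topological_space \<Rightarrow> real) \<Rightarrow> real"
  assumes "compact (UNIV::'c set)" "positive_strong_submeasure \<mu>"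
  shows "sm_norm \<mu> = max \<bar>\<mu> (\<lambda>_. 1)\<bar> \<bar>\<mu> (\<lambda>_. -1)\<bar>"
  unfolding sm_norm_def
proof (rule cInf_eq_minimum)
  let ?M = "max \<bar>\<mu> (\<lambda>_. 1)\<bar> \<bar>\<mu> (\<lambda>_. -1)\<bar>"
  show "?M \<in> {C. \<forall>\<phi>. continuous_on UNIV \<phi> \<longrightarrow> \<bar>\<mu> \<phi>\<bar> \<le> C * sup_norm \<phi>}"
  proof (safe)
    fix \<phi> :: "'c \<Rightarrow> real" assume c: "continuous_on UNIV \<phi>"
    let ?s = "sup_norm \<phi>"
    have b: "\<And>x. \<bar>\<phi> x\<bar> \<le> ?s" using sup_norm_bound[OF assms(1) c] .
    then have s0: "?s \<ge> 0" by (meson abs_ge_zero order_trans)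
    have bb: "\<And>x. -?s \<le> \<phi> x \<and> \<phi> x \<le> ?s" 
    proof -
      fix x show "-?s \<le> \<phi> x \<and> \<phi> x \<le> ?s" using b[of x] unfolding abs_le_iff by linarith
    qed
    have "\<mu> \<phi> \<le> \<mu> (\<lambda>_. ?s * 1)"
      by (rule pssm_mono[OF assms(2) c]) (use bb in \<open>auto\<close>)
    also have "\<dots> = ?s * \<mu> (\<lambda>_. 1)" by (rule pssm_const[OF assms(2) s0])
    also have "\<dots> \<le> ?M * ?s" using s0
      by (metis abs_ge_self max.cobounded1 mult.commute mult_left_mono order_trans)
    finally have u: "\<mu> \<phi> \<le> ?M * ?s" .
    have "?s * \<mu> (\<lambda>_. -1) = \<mu> (\<lambda>_. ?s * -1)" by (rule pssm_const[OF assms(2) s0, symmetric])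
    also have "\<dots> \<le> \<mu> \<phi>"
      by (rule pssm_mono[OF assms(2) _ c]) (use bb in \<open>auto\<close>)
    finally have l0: "?s * \<mu> (\<lambda>_. -1) \<le> \<mu> \<phi>" .
    have "- (?M * ?s) \<le> ?s * \<mu> (\<lambda>_. -1)"
    proof -
      have "- \<mu> (\<lambda>_. -1) \<le> ?M" by auto
      then have "?s * (- \<mu> (\<lambda>_. -1)) \<le> ?s * ?M" using s0 by (rule mult_left_mono)
      then show ?thesis by (simp add: algebra_simps)
    qed
    with l0 u show "\<bar>\<mu> \<phi>\<bar> \<le> ?M * ?s" by linarith
  qed
  fix C assume "C \<in> {C. \<forall>\<phi>. continuous_on UNIV \<phi> \<longrightarrow> \<bar>\<mu> \<phi>\<bar> \<le> C * sup_norm \<phi>}"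
  then have H: "\<forall>\<phi>. continuous_on UNIV \<phi> \<longrightarrow> \<bar>\<mu> \<phi>\<bar> \<le> C * sup_norm \<phi>" by simp
  have 1: "\<bar>\<mu> (\<lambda>_. 1)\<bar> \<le> C * sup_norm (\<lambda>_::'c. (1::real))"
    using H continuous_on_const by blast
  have 2: "\<bar>\<mu> (\<lambda>_. -1)\<bar> \<le> C * sup_norm (\<lambda>_::'c. (-1::real))"
    using H continuous_on_const by blast
  have n1: "sup_norm (\<lambda>_::'c. (1::real)) = 1" "sup_norm (\<lambda>_::'c. (-1::real)) = 1"
    by (simp_all add: sup_norm_const)
  show "?M \<le> C" using 1 2 unfolding n1 by (intro max.boundedI) simp_all
qed



lemma LS_fin:
  fixes g :: "'x \<Rightarrow> real"
  assumes F: "F \<noteq> bot" and ev: "eventually (\<lambda>z. \<bar>g z\<bar> \<le> B) F"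
  shows "Limsup F (\<lambda>z. ereal (g z)) = ereal (real_of_ereal (Limsup F (\<lambda>z. ereal (g z))))"
    and "\<bar>real_of_ereal (Limsup F (\<lambda>z. ereal (g z)))\<bar> \<le> B"
proof -
  have u: "Limsup F (\<lambda>z. ereal (g z)) \<le> ereal B"
    by (rule Limsup_bounded) (use ev in \<open>eventually_elim, auto\<close>)
  have l: "ereal (-B) \<le> Limsup F (\<lambda>z. ereal (g z))"
    by (rule le_Limsup[OF F]) (use ev in \<open>eventually_elim, auto\<close>)
  from u l obtain r where r: "Limsup F (\<lambda>z. ereal (g z)) = ereal r"
    by (cases "Limsup F (\<lambda>z. ereal (g z))") auto
  show "Limsup F (\<lambda>z. ereal (g z)) = ereal (real_of_ereal (Limsup F (\<lambda>z. ereal (g z))))"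
    using r by simp
  show "\<bar>real_of_ereal (Limsup F (\<lambda>z. ereal (g z)))\<bar> \<le> B" using u l r by auto
qed

lemma LS_add:
  fixes g h :: "'x \<Rightarrow> real"
  assumes "Limsup F (\<lambda>z. ereal (g z)) = ereal a" "Limsup F (\<lambda>z. ereal (h z)) = ereal b"
  shows "Limsup F (\<lambda>z. ereal (g z + h z)) \<le> ereal (a + b)"
  unfolding Limsup_le_iff
proof (intro allI impI)
  fix y assume y: "ereal (a + b) < y"
  show "\<forall>\<^sub>F x in F. ereal (g x + h x) < y"
  proof (cases y)
    case (real r)
    then have yr: "y = ereal r" .
    define e where "e = (r - a - b) / 2"
    have e: "e > 0" using y real by (simp add: e_def)
    have 1: "\<forall>\<^sub>F x in F. ereal (g x) < ereal (a + e)"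
      by (rule Limsup_lessD) (use assms e in simp)
    have 2: "\<forall>\<^sub>F x in F. ereal (h x) < ereal (b + e)"
      by (rule Limsup_lessD) (use assms e in simp)
    have key: "\<And>u v. u < a+e \<Longrightarrow> v < b+e \<Longrightarrow> u+v < r" 
    proof -
      fix u v assume "u < a+e" "v < b+e"
      then have "u+v < a+b+2*e" by linarith
      also have "a+b+2*e = r" by (simp add: e_def field_simps)
      finally show "u+v < r" .
    qed
    from 1 2 show ?thesis
      by eventually_elim (use key in \<open>simp add: yr\<close>)
  qed (use y in auto)
qed

lemma at_ntriv:
  fixes V :: "'b::metric_space set"
  assumes "closure V = UNIV" "y \<notin> V"
  shows "at y within V \<noteq> bot"
  using assms by (simp add: at_within_eq_bot_iff)

lemma ev_within: "(\<And>z. z \<in> V \<Longrightarrow> P z) \<Longrightarrow> eventually P (at y within V)"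
  by (simp add: eventually_at_filter)

lemma ev_bound: "(\<And>y. y \<in> V \<Longrightarrow> \<bar>g y\<bar> \<le> (B::real)) \<Longrightarrow> eventually (\<lambda>z. \<bar>g z\<bar> \<le> B) (at y within V)"
  by (simp add: eventually_at_filter)

context
  fixes V :: "'b::metric_space set"
  assumes dense: "closure V = UNIV"
begin

lemma ext_bound:
  assumes "\<And>y. y \<in> V \<Longrightarrow> \<bar>g y\<bar> \<le> B"
  shows "\<bar>ext_limsup V g y\<bar> \<le> B"
proof (cases "y \<in> V")
  case True then show ?thesis using assms by (simp add: ext_limsup_def)
next
  case False
  show ?thesis unfolding ext_limsup_def if_not_P[OF False]
    by (rule LS_fin(2)[OF at_ntriv[OF dense False] ev_bound[where g=g and B=B, OF assms]])
qed

lemma ext_const: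
  assumes "\<And>y. y \<in> V \<Longrightarrow> g y = c"
  shows "ext_limsup V g y = c"
proof (cases "y \<in> V")
  case True then show ?thesis using assms by (simp add: ext_limsup_def)
next
  case False
  have "Limsup (at y within V) (\<lambda>z. ereal (g z)) = Limsup (at y within V) (\<lambda>z. ereal c)"
    by (rule Limsup_eq) (use ev_within[of V] assms in auto)
  also have "\<dots> = ereal c" by (rule Limsup_const) (use at_ntriv[OF dense False] in simp)
  finally show ?thesis using False by (simp add: ext_limsup_def)
qed

lemma ext_mono:
  assumes "\<And>y. y \<in> V \<Longrightarrow> \<bar>g y\<bar> \<le> B" "\<And>y. y \<in> V \<Longrightarrow> \<bar>h y\<bar> \<le> B"
    "\<And>y. y \<in> V \<Longrightarrow> g y \<le> h y"
  shows "ext_limsup V g y \<le> ext_limsup V h y"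
proof (cases "y \<in> V")
  case True then show ?thesis using assms by (simp add: ext_limsup_def)
next
  case False
  note F = at_ntriv[OF dense False]
  have "Limsup (at y within V) (\<lambda>z. ereal (g z)) \<le> Limsup (at y within V) (\<lambda>z. ereal (h z))"
    by (rule Limsup_mono) (use ev_within[of V] assms in auto)
  then show ?thesis using False
    LS_fin(1)[OF F ev_bound[where g=g and B=B, OF assms(1)]] LS_fin(1)[OF F ev_bound[where g=h and B=B, OF assms(2)]]
    by (simp add: ext_limsup_def) (metis ereal_less_eq(3))
qed

lemma ext_add:
  assumes "\<And>y. y \<in> V \<Longrightarrow> \<bar>g y\<bar> \<le> B" "\<And>y. y \<in> V \<Longrightarrow> \<bar>h y\<bar> \<le> B"
  shows "ext_limsup V (\<lambda>y. g y + h y) y \<le> ext_limsup V g y + ext_limsup V h y"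
proof (cases "y \<in> V")
  case True then show ?thesis by (simp add: ext_limsup_def)
next
  case False
  note F = at_ntriv[OF dense False]
  have b2: "\<And>y. y \<in> V \<Longrightarrow> \<bar>g y + h y\<bar> \<le> B + B" using assms by (smt (verit))
  define L where "L = Limsup (at y within V) (\<lambda>z. ereal (g z + h z))"
  have Le: "L = ereal (real_of_ereal L)" unfolding L_def by (rule LS_fin(1)[OF F ev_bound[where g="\<lambda>y. g y + h y" and B="B+B", OF b2]])
  have "L \<le>
     ereal (real_of_ereal (Limsup (at y within V) (\<lambda>z. ereal (g z))) + real_of_ereal (Limsup (at y within V) (\<lambda>z. ereal (h z))))"
    unfolding L_def by (rule LS_add[OF LS_fin(1)[OF F ev_bound[where g=g and B=B, OF assms(1)]] LS_fin(1)[OF F ev_bound[where g=h and B=B, OF assms(2)]]])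
  then have "real_of_ereal L \<le> real_of_ereal (Limsup (at y within V) (\<lambda>z. ereal (g z))) + real_of_ereal (Limsup (at y within V) (\<lambda>z. ereal (h z)))"
    by (subst (asm) Le) simp
  then show ?thesis unfolding L_def ext_limsup_def if_not_P[OF False] .
qed

lemma ext_scale:
  assumes "\<And>y. y \<in> V \<Longrightarrow> \<bar>g y\<bar> \<le> B" "t \<ge> 0"
  shows "ext_limsup V (\<lambda>y. t * g y) y = t * ext_limsup V g y"
proof (cases "y \<in> V")
  case True then show ?thesis by (simp add: ext_limsup_def)
next
  case False
  note F = at_ntriv[OF dense False]
  obtain r where r: "Limsup (at y within V) (\<lambda>z. ereal (g z)) = ereal r"
    using LS_fin(1)[OF F ev_bound[where g=g and B=B, OF assms(1)]] by blast
  have "Limsup (at y within V) (\<lambda>z. ereal (t * g z)) = Limsup (at y within V) (\<lambda>z. ereal t * ereal (g z))"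
    by (simp only: times_ereal.simps)
  also have "\<dots> = ereal t * Limsup (at y within V) (\<lambda>z. ereal (g z))"
    by (rule Limsup_ereal_mult_left[OF F assms(2)])
  also have "\<dots> = ereal (t * r)" by (simp only: r times_ereal.simps)
  finally have e: "Limsup (at y within V) (\<lambda>z. ereal (t * g z)) = ereal (t * r)" .
  show ?thesis unfolding ext_limsup_def if_not_P[OF False] e r by simp
qed

end


context
  fixes U :: "'a::metric_space set" and f :: "'a \<Rightarrow> 'b::metric_space" and d :: nat
  assumes Xc: "compact (UNIV::'a set)"
    and dense: "closure (f ` U) = UNIV"
    and deg: "\<forall>y\<in>f ` U. finite {x\<in>U. f x = y} \<and> card {x\<in>U. f x = y} = d"
begin

lemma G_bound:
  assumes c: "continuous_on UNIV \<phi>" and y: "y \<in> f ` U"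
  shows "\<bar>\<Sum>x\<in>{x\<in>U. f x = y}. \<phi> x\<bar> \<le> real d * sup_norm \<phi>"
proof -
  have "\<bar>\<Sum>x\<in>{x\<in>U. f x = y}. \<phi> x\<bar> \<le> (\<Sum>x\<in>{x\<in>U. f x = y}. \<bar>\<phi> x\<bar>)" by (rule sum_abs)
  also have "\<dots> \<le> of_nat (card {x\<in>U. f x = y}) * sup_norm \<phi>"
    by (rule sum_bounded_above) (rule sup_norm_bound[OF Xc c])
  finally show ?thesis using deg y by simp
qed

lemma snorm_nonneg: "continuous_on UNIV \<phi> \<Longrightarrow> sup_norm (\<phi>::'a \<Rightarrow> real) \<ge> 0"
  by (meson abs_ge_zero order_trans sup_norm_bound[OF Xc])

lemma push_bound:
  assumes c: "continuous_on UNIV \<phi>"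
  shows "\<bar>push_fwd U f \<phi> y\<bar> \<le> real d * sup_norm \<phi>"
  unfolding push_fwd_def by (rule ext_bound[OF dense]) (rule G_bound[OF c])

lemma push_const: "push_fwd U f (\<lambda>_. c) y = real d * c"
  unfolding push_fwd_def
proof (rule ext_const[OF dense])
  fix y assume "y \<in> f ` U"
  then have "card {x\<in>U. f x = y} = d" using deg by blast
  then show "(\<Sum>x\<in>{x\<in>U. f x = y}. c) = real d * c" by simp
qed

lemma push_mono:
  assumes c: "continuous_on UNIV \<phi>" "continuous_on UNIV \<psi>" and le: "\<And>x. \<phi> x \<le> \<psi> x"
  shows "push_fwd U f \<phi> y \<le> push_fwd U f \<psi> y"
  unfolding push_fwd_def
proof (rule ext_mono[OF dense, where B = "real d * sup_norm \<phi> + real d * sup_norm \<psi>"])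
  fix y assume y: "y \<in> f ` U"
  have p: "real d * sup_norm \<phi> \<ge> 0" "real d * sup_norm \<psi> \<ge> 0" using snorm_nonneg c by auto
  show "\<bar>\<Sum>x\<in>{x\<in>U. f x = y}. \<phi> x\<bar> \<le> real d * sup_norm \<phi> + real d * sup_norm \<psi>"
    using G_bound[OF c(1) y] p by linarith
  show "\<bar>\<Sum>x\<in>{x\<in>U. f x = y}. \<psi> x\<bar> \<le> real d * sup_norm \<phi> + real d * sup_norm \<psi>"
    using G_bound[OF c(2) y] p by linarith
  show "(\<Sum>x\<in>{x\<in>U. f x = y}. \<phi> x) \<le> (\<Sum>x\<in>{x\<in>U. f x = y}. \<psi> x)"
    by (rule sum_mono) (rule le)
qed

lemma push_add:
  assumes c: "continuous_on UNIV \<phi>" "continuous_on UNIV \<psi>"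
  shows "push_fwd U f (\<lambda>x. \<phi> x + \<psi> x) y \<le> push_fwd U f \<phi> y + push_fwd U f \<psi> y"
proof -
  have e: "(\<lambda>y. \<Sum>x\<in>{x\<in>U. f x = y}. \<phi> x + \<psi> x) =
      (\<lambda>y. (\<Sum>x\<in>{x\<in>U. f x = y}. \<phi> x) + (\<Sum>x\<in>{x\<in>U. f x = y}. \<psi> x))"
    by (simp add: sum.distrib)
  have p: "real d * sup_norm \<phi> \<ge> 0" "real d * sup_norm \<psi> \<ge> 0" using snorm_nonneg c by auto
  show ?thesis unfolding push_fwd_def e
  proof (rule ext_add[OF dense, where B = "real d * sup_norm \<phi> + real d * sup_norm \<psi>"])
    fix y assume y: "y \<in> f ` U"
    show "\<bar>\<Sum>x\<in>{x\<in>U. f x = y}. \<phi> x\<bar> \<le> real d * sup_norm \<phi> + real d * sup_norm \<psi>"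
      using G_bound[OF c(1) y] p by linarith
    show "\<bar>\<Sum>x\<in>{x\<in>U. f x = y}. \<psi> x\<bar> \<le> real d * sup_norm \<phi> + real d * sup_norm \<psi>"
      using G_bound[OF c(2) y] p by linarith
  qed
qed

lemma push_scale:
  assumes c: "continuous_on UNIV \<phi>" and t: "t \<ge> 0"
  shows "push_fwd U f (\<lambda>x. t * \<phi> x) y = t * push_fwd U f \<phi> y"
proof -
  have e: "(\<lambda>y. \<Sum>x\<in>{x\<in>U. f x = y}. t * \<phi> x) = (\<lambda>y. t * (\<Sum>x\<in>{x\<in>U. f x = y}. \<phi> x))"
    by (simp add: sum_distrib_left)
  show ?thesis unfolding push_fwd_def e
    by (rule ext_scale[OF dense _ t]) (rule G_bound[OF c])
qed

context
  fixes \<nu> :: "('b \<Rightarrow> real) \<Rightarrow> real"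
  assumes nu: "positive_strong_submeasure \<nu>"
begin

lemma pb_bdd:
  assumes c: "continuous_on UNIV \<phi>"
  shows "bdd_below {\<nu> \<psi> |\<psi>. continuous_on UNIV \<psi> \<and> (\<forall>y. push_fwd U f \<phi> y \<le> \<psi> y)}"
proof (rule bdd_belowI, safe)
  fix \<psi> :: "'b \<Rightarrow> real" assume cp: "continuous_on UNIV \<psi>" and le: "\<forall>y. push_fwd U f \<phi> y \<le> \<psi> y"
  show "\<nu> (\<lambda>_. - (real d * sup_norm \<phi>)) \<le> \<nu> \<psi>"
  proof (rule pssm_mono[OF nu continuous_on_const cp])
    fix y show "- (real d * sup_norm \<phi>) \<le> \<psi> y"
      using push_bound[OF c, of y] le[rule_format, of y] by linarith
  qed
qed

lemma pb_le:
  assumes c: "continuous_on UNIV \<phi>" and cp: "continuous_on UNIV \<psi>"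
    and le: "\<And>y. push_fwd U f \<phi> y \<le> \<psi> y"
  shows "pull_back U f \<nu> \<phi> \<le> \<nu> \<psi>"
  unfolding pull_back_def by (rule cInf_lower[OF _ pb_bdd[OF c]]) (use cp le in blast)

lemma pb_ge:
  assumes c: "continuous_on UNIV \<phi>"
    and H: "\<And>\<psi>. continuous_on UNIV \<psi> \<Longrightarrow> (\<And>y. push_fwd U f \<phi> y \<le> \<psi> y) \<Longrightarrow> a \<le> \<nu> \<psi>"
  shows "a \<le> pull_back U f \<nu> \<phi>"
  unfolding pull_back_def
proof (rule cInf_greatest)
  show "{\<nu> \<psi> |\<psi>. continuous_on UNIV \<psi> \<and> (\<forall>y. push_fwd U f \<phi> y \<le> \<psi> y)} \<noteq> {}"
    using push_bound[OF c] by (intro ex_in_conv[THEN iffD1] exI[of _ "\<nu> (\<lambda>_. real d * sup_norm \<phi>)"])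
      (auto simp: abs_le_iff intro!: exI[of _ "\<lambda>_. real d * sup_norm \<phi>"])
qed (use H in blast)

lemma pb_const:
  assumes "c \<ge> 0"
  shows "pull_back U f \<nu> (\<lambda>_. c * a) = real d * c * \<nu> (\<lambda>_. a)"
proof (rule antisym)
  have "pull_back U f \<nu> (\<lambda>_. c * a) \<le> \<nu> (\<lambda>_. (real d * c) * a)"
    by (rule pb_le) (auto simp: push_const)
  also have "\<dots> = real d * c * \<nu> (\<lambda>_. a)" by (rule pssm_const[OF nu]) (use assms in simp)
  finally show "pull_back U f \<nu> (\<lambda>_. c * a) \<le> real d * c * \<nu> (\<lambda>_. a)" .
  show "real d * c * \<nu> (\<lambda>_. a) \<le> pull_back U f \<nu> (\<lambda>_. c * a)"
  proof (rule pb_ge)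
    fix \<psi> :: "'b \<Rightarrow> real" assume cp: "continuous_on UNIV \<psi>" and le: "\<And>y. push_fwd U f (\<lambda>_. c * a) y \<le> \<psi> y"
    have "real d * c * \<nu> (\<lambda>_. a) = \<nu> (\<lambda>_. (real d * c) * a)"
      by (rule pssm_const[OF nu, symmetric]) (use assms in simp)
    also have "\<dots> \<le> \<nu> \<psi>"
      by (rule pssm_mono[OF nu continuous_on_const cp]) (use le in \<open>simp add: push_const mult.assoc\<close>)
    finally show "real d * c * \<nu> (\<lambda>_. a) \<le> \<nu> \<psi>" .
  qed simp
qed

lemma pb_pssm: "positive_strong_submeasure (pull_back U f \<nu>)"
  unfolding positive_strong_submeasure_def strong_submeasure_def
proof (intro conjI allI impI)
  fix \<phi> \<psi> :: "'a \<Rightarrow> real" assume c1: "continuous_on UNIV \<phi>" and c2: "continuous_on UNIV \<psi>"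
  have c12: "continuous_on UNIV (\<lambda>x. \<phi> x + \<psi> x)" using c1 c2 by (intro continuous_intros)
  show "pull_back U f \<nu> (\<lambda>x. \<phi> x + \<psi> x) \<le> pull_back U f \<nu> \<phi> + pull_back U f \<nu> \<psi>"
  proof -
    have "pull_back U f \<nu> (\<lambda>x. \<phi> x + \<psi> x) - pull_back U f \<nu> \<phi> \<le> pull_back U f \<nu> \<psi>"
    proof (rule pb_ge[OF c2])
      fix \<psi>2 assume cp2: "continuous_on UNIV \<psi>2" and le2: "\<And>y. push_fwd U f \<psi> y \<le> \<psi>2 y"
      have "pull_back U f \<nu> (\<lambda>x. \<phi> x + \<psi> x) - \<nu> \<psi>2 \<le> pull_back U f \<nu> \<phi>"
      proof (rule pb_ge[OF c1])
        fix \<psi>1 assume cp1: "continuous_on UNIV \<psi>1" and le1: "\<And>y. push_fwd U f \<phi> y \<le> \<psi>1 y"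
        have "pull_back U f \<nu> (\<lambda>x. \<phi> x + \<psi> x) \<le> \<nu> (\<lambda>y. \<psi>1 y + \<psi>2 y)"
        proof (rule pb_le[OF c12])
          show "continuous_on UNIV (\<lambda>y. \<psi>1 y + \<psi>2 y)" using cp1 cp2 by (intro continuous_intros)
          fix y show "push_fwd U f (\<lambda>x. \<phi> x + \<psi> x) y \<le> \<psi>1 y + \<psi>2 y"
            using push_add[OF c1 c2, of y] le1[of y] le2[of y] by linarith
        qed
        also have "\<dots> \<le> \<nu> \<psi>1 + \<nu> \<psi>2" by (rule pssm_add[OF nu cp1 cp2])
        finally show "pull_back U f \<nu> (\<lambda>x. \<phi> x + \<psi> x) - \<nu> \<psi>2 \<le> \<nu> \<psi>1" by simp
      qed
      then show "pull_back U f \<nu> (\<lambda>x. \<phi> x + \<psi> x) - pull_back U f \<nu> \<phi> \<le> \<nu> \<psi>2" by simp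
    qed
    then show ?thesis by simp
  qed
next
  fix \<phi> :: "'a \<Rightarrow> real" and t :: real assume c: "continuous_on UNIV \<phi>" and t: "t \<ge> 0"
  have ct: "continuous_on UNIV (\<lambda>x. t * \<phi> x)" using c by (intro continuous_intros)
  show "pull_back U f \<nu> (\<lambda>x. t * \<phi> x) = t * pull_back U f \<nu> \<phi>"
  proof (cases "t = 0")
    case True
    have "pull_back U f \<nu> (\<lambda>x. t * \<phi> x) = pull_back U f \<nu> (\<lambda>_. 0 * 0)" using True by simp
    also have "\<dots> = 0" by (subst pb_const) (auto simp: pssm_const[OF nu, of 0 0, simplified])
    finally show ?thesis using True by simp
  next
    case False
    then have tp: "t > 0" using t by simp
    show ?thesis
    proof (rule antisym)
      have "pull_back U f \<nu> (\<lambda>x. t * \<phi> x) / t \<le> pull_back U f \<nu> \<phi>"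
      proof (rule pb_ge[OF c])
        fix \<psi> assume cp: "continuous_on UNIV \<psi>" and le: "\<And>y. push_fwd U f \<phi> y \<le> \<psi> y"
        have "pull_back U f \<nu> (\<lambda>x. t * \<phi> x) \<le> \<nu> (\<lambda>y. t * \<psi> y)"
        proof (rule pb_le[OF ct])
          show "continuous_on UNIV (\<lambda>y. t * \<psi> y)" using cp by (intro continuous_intros)
          fix y show "push_fwd U f (\<lambda>x. t * \<phi> x) y \<le> t * \<psi> y"
            using push_scale[OF c t, of y] le[of y] t by (simp add: mult_left_mono)
        qed
        also have "\<dots> = t * \<nu> \<psi>" by (rule pssm_scale[OF nu cp t])
        finally show "pull_back U f \<nu> (\<lambda>x. t * \<phi> x) / t \<le> \<nu> \<psi>" using tp
          by (simp add: divide_le_eq mult.commute)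
      qed
      then show "pull_back U f \<nu> (\<lambda>x. t * \<phi> x) \<le> t * pull_back U f \<nu> \<phi>" using tp
        by (simp add: divide_le_eq mult.commute)
      show "t * pull_back U f \<nu> \<phi> \<le> pull_back U f \<nu> (\<lambda>x. t * \<phi> x)"
      proof (rule pb_ge[OF ct])
        fix \<psi> assume cp: "continuous_on UNIV \<psi>" and le: "\<And>y. push_fwd U f (\<lambda>x. t * \<phi> x) y \<le> \<psi> y"
        have "pull_back U f \<nu> \<phi> \<le> \<nu> (\<lambda>y. (1/t) * \<psi> y)"
        proof (rule pb_le[OF c])
          show "continuous_on UNIV (\<lambda>y. (1/t) * \<psi> y)" using cp by (intro continuous_intros)
          fix y show "push_fwd U f \<phi> y \<le> (1/t) * \<psi> y"
            using push_scale[OF c t, of y] le[of y] tp by (simp add: field_simps)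
        qed
        also have "\<dots> = (1/t) * \<nu> \<psi>" by (rule pssm_scale[OF nu cp]) (use tp in simp)
        finally have "pull_back U f \<nu> \<phi> \<le> \<nu> \<psi> / t" by simp
        then show "t * pull_back U f \<nu> \<phi> \<le> \<nu> \<psi>" using tp
          by (simp add: le_divide_eq mult.commute)
      qed
    qed
  qed
next
  let ?M = "max \<bar>\<nu> (\<lambda>_. 1)\<bar> \<bar>\<nu> (\<lambda>_. -1)\<bar>"
  show "\<exists>C. \<forall>\<phi>. continuous_on UNIV \<phi> \<longrightarrow> \<bar>pull_back U f \<nu> \<phi>\<bar> \<le> C * sup_norm \<phi>"
  proof (intro exI[of _ "real d * ?M"] allI impI)
    fix \<phi> :: "'a \<Rightarrow> real" assume c: "continuous_on UNIV \<phi>"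
    let ?s = "real d * sup_norm \<phi>"
    have s0: "?s \<ge> 0" using snorm_nonneg[OF c] by simp
    have "pull_back U f \<nu> \<phi> \<le> \<nu> (\<lambda>_. ?s * 1)"
      by (rule pb_le[OF c]) (use push_bound[OF c] in \<open>auto simp: abs_le_iff\<close>)
    also have "\<dots> = ?s * \<nu> (\<lambda>_. 1)" by (rule pssm_const[OF nu s0])
    also have "\<dots> \<le> ?s * ?M" by (rule mult_left_mono[OF _ s0]) auto
    finally have u: "pull_back U f \<nu> \<phi> \<le> ?s * ?M" .
    have "?s * \<nu> (\<lambda>_. -1) \<le> pull_back U f \<nu> \<phi>"
    proof (rule pb_ge[OF c])
      fix \<psi> assume cp: "continuous_on UNIV \<psi>" and le: "\<And>y. push_fwd U f \<phi> y \<le> \<psi> y"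
      have "?s * \<nu> (\<lambda>_. -1) = \<nu> (\<lambda>_. ?s * -1)" by (rule pssm_const[OF nu s0, symmetric])
      also have "\<dots> \<le> \<nu> \<psi>"
      proof (rule pssm_mono[OF nu continuous_on_const cp])
        fix y show "?s * -1 \<le> \<psi> y" using push_bound[OF c, of y] le[of y] by linarith
      qed
      finally show "?s * \<nu> (\<lambda>_. -1) \<le> \<nu> \<psi>" .
    qed
    moreover have "- (?s * ?M) \<le> ?s * \<nu> (\<lambda>_. -1)"
    proof -
      have "?s * (- \<nu> (\<lambda>_. -1)) \<le> ?s * ?M" by (rule mult_left_mono[OF _ s0]) auto
      then show ?thesis by simp
    qed
    moreover have "?s * ?M = real d * ?M * sup_norm \<phi>" by (simp add: mult_ac)
    ultimately show "\<bar>pull_back U f \<nu> \<phi>\<bar> \<le> real d * ?M * sup_norm \<phi>" using u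
      unfolding abs_le_iff by linarith
  qed
next
  fix \<phi> \<psi> :: "'a \<Rightarrow> real" assume c1: "continuous_on UNIV \<phi>" and c2: "continuous_on UNIV \<psi>"
    and le: "\<forall>x. \<phi> x \<le> \<psi> x"
  show "pull_back U f \<nu> \<phi> \<le> pull_back U f \<nu> \<psi>"
  proof (rule pb_ge[OF c2])
    fix \<psi>' assume cp: "continuous_on UNIV \<psi>'" and le': "\<And>y. push_fwd U f \<psi> y \<le> \<psi>' y"
    show "pull_back U f \<nu> \<phi> \<le> \<nu> \<psi>'"
    proof (rule pb_le[OF c1 cp])
      fix y show "push_fwd U f \<phi> y \<le> \<psi>' y"
      proof -
        have "push_fwd U f \<phi> y \<le> push_fwd U f \<psi> y" by (rule push_mono[OF c1 c2]) (use le in blast)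
        then show ?thesis using le'[of y] by linarith
      qed
    qed
  qed
qed

end
end


theorem theorem2p12:
  fixes f :: "'a::metric_space \<Rightarrow> 'b::metric_space"
    and D U :: "'a set" and d :: nat
  assumes X_compact: "compact (UNIV :: 'a set)"
    and Y_compact: "compact (UNIV :: 'b set)"
    and D_open: "open D" and D_dense: "closure D = UNIV"
    and f_cont: "continuous_on D f"
    and U_open: "open U" and U_dense: "closure U = UNIV" and U_sub: "U \<subseteq> D"
    and fU_open: "open (f ` U)" and fU_dense: "closure (f ` U) = UNIV"
    and cover: "covering_space U f (f ` U)"
    and proper: "proper_map (top_of_set U) (top_of_set (f ` U)) f"
    and degree: "\<forall>y\<in>f ` U. finite {x\<in>U. f x = y} \<and> card {x\<in>U. f x = y} = d"
  shows "\<forall>\<nu>::('b \<Rightarrow> real) \<Rightarrow> real. positive_strong_submeasure \<nu> \<longrightarrow>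
           positive_strong_submeasure (pull_back U f \<nu>) \<and>
           pull_back U f \<nu> (\<lambda>_. 1) = real d * \<nu> (\<lambda>_. 1) \<and>
           pull_back U f \<nu> (\<lambda>_. -1) = real d * \<nu> (\<lambda>_. -1) \<and>
           sm_norm (pull_back U f \<nu>) = real d * sm_norm \<nu>"
proof (intro allI impI)
  fix \<nu> :: "('b \<Rightarrow> real) \<Rightarrow> real" assume nu: "positive_strong_submeasure \<nu>"
  have P: "positive_strong_submeasure (pull_back U f \<nu>)"
    by (rule pb_pssm[OF X_compact fU_dense degree nu])
  have p1: "pull_back U f \<nu> (\<lambda>_. 1) = real d * \<nu> (\<lambda>_. 1)"
    using pb_const[OF X_compact fU_dense degree nu, of 1 1] by simp
  have p2: "pull_back U f \<nu> (\<lambda>_. -1) = real d * \<nu> (\<lambda>_. -1)"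
    using pb_const[OF X_compact fU_dense degree nu, of 1 "-1"] by simp
  have "sm_norm (pull_back U f \<nu>) = max \<bar>real d * \<nu> (\<lambda>_. 1)\<bar> \<bar>real d * \<nu> (\<lambda>_. -1)\<bar>"
    using pssm_norm[OF X_compact P] p1 p2 by simp
  also have "\<dots> = real d * max \<bar>\<nu> (\<lambda>_. 1)\<bar> \<bar>\<nu> (\<lambda>_. -1)\<bar>"
    by (simp add: abs_mult max_mult_distrib_left)
  also have "\<dots> = real d * sm_norm \<nu>" using pssm_norm[OF Y_compact nu] by simp
  finally show "positive_strong_submeasure (pull_back U f \<nu>) \<and>
           pull_back U f \<nu> (\<lambda>_. 1) = real d * \<nu> (\<lambda>_. 1) \<and>
           pull_back U f \<nu> (\<lambda>_. -1) = real d * \<nu> (\<lambda>_. -1) \<and>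
           sm_norm (pull_back U f \<nu>) = real d * sm_norm \<nu>" using P p1 p2 by simp
qed


end
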